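(* Let $N\ge1$, $T>0$, $\sigma>0$, $\lambda>0$, $\kappa>0$, let the cost function be $g(z)=\kappa z$, and let all $N$ players be risk neutral with claims $H^j\in\mathcal{C}^2_b(\mathbb{R})$ satisfying $\sum_{i=1}^N H^i=0$. Let $(v^1,\dots,v^N)$ be the classical solution of $$0=v^j_t+\tfrac12\sigma^2v^j_{pp}+\lambda\dot X^*\,v^j_p-\kappa\,\dot X^j\,\dot X^*,\qquad v^j(T,p)=H^j(p),\quad j=1,\dots,N,$$ with equilibrium trading speeds $\dot X^j=\frac{\lambda}{\kappa}\Big(v^j_p-\frac{1}{N+1}\sum_{i=1}^Nv^i_p\Big)$ and $\dot X^*=\sum_{i=1}^N\dot X^i=\frac{\lambda}{\kappa(N+1)}\sum_{i=1}^Nv^i_p$. Then the aggregate equilibrium trading speed vanishes identically: $\sum_{i=1}^N\dot X^i\equiv0$.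
   Context: Setting: players $j=1,\dots,N$ hold cash-settled claims $H^j(P_T)$ on a stock with price $dP_t=\sigma dB_t+\lambda\sum_i\dot X^i_t dt$, where $X^i$ is player $i$'s (absolutely continuous) holding with $X^i_0=0$, and player $j$ maximizes $\mathbb{E}[-\int_0^T\dot X^j_t\,g(\sum_i\dot X^i_t)dt+H^j(P_T)]$. The functions $v^j$ are the players' value functions and the formulas for $\dot X^j$ give the Nash equilibrium feedback trading speeds. $\mathcal{C}^2_b$ denotes functions bounded together with derivatives up to order 2. *)

theory Defs
  imports "HOL-Analysis.Analysis"
begin

definition C2b :: "(real \<Rightarrow> real) \<Rightarrow> (real \<Rightarrow> real) \<Rightarrow> (real \<Rightarrow> real) \<Rightarrow> bool" where
  "C2b H H1 H2 \<longleftrightarrow>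
     (\<forall>p. (H has_real_derivative H1 p) (at p)) \<and>
     (\<forall>p. (H1 has_real_derivative H2 p) (at p)) \<and>
     continuous_on UNIV H2 \<and>
     bounded (range H) \<and> bounded (range H1) \<and> bounded (range H2)"

definition Xdot :: "nat \<Rightarrow> real \<Rightarrow> real \<Rightarrow> (nat \<Rightarrow> real \<Rightarrow> real \<Rightarrow> real) \<Rightarrow> nat \<Rightarrow> real \<Rightarrow> real \<Rightarrow> real" where
  "Xdot N lam kap vp j t p =
     lam / kap * (vp j t p - 1 / (real N + 1) * (\<Sum>i=1..N. vp i t p))"

definition Xstar :: "nat \<Rightarrow> real \<Rightarrow> real \<Rightarrow> (nat \<Rightarrow> real \<Rightarrow> real \<Rightarrow> real) \<Rightarrow> real \<Rightarrow> real \<Rightarrow> real" where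
  "Xstar N lam kap vp t p = lam / (kap * (real N + 1)) * (\<Sum>i=1..N. vp i t p)"

end

theory Submission
  imports Defs
begin

lemma max_second:
  fixes f f1 :: "real \<Rightarrow> real"
  assumes mx: "\<And>q. f q \<le> f p0"
    and d1: "\<And>q. (f has_real_derivative f1 q) (at q)"
    and d2: "(f1 has_real_derivative f2) (at p0)"
  shows "f1 p0 = 0 \<and> f2 \<le> 0"
proof -
  have z: "f1 p0 = 0"
    using DERIV_local_max[OF d1[of p0], of 1] mx by auto
  moreover have "f2 \<le> 0"
  proof (rule ccontr)
    assume "\<not> f2 \<le> 0"
    then obtain d where d: "d > 0" "\<forall>h>0. h < d \<longrightarrow> f1 p0 < f1 (p0 + h)"
      using DERIV_pos_inc_right[OF d2] by force
    have "p0 < p0 + d/2" using d by simp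
    from MVT2[OF this, of f f1] d1 obtain zz where zz: "p0 < zz" "zz < p0 + d/2"
      "f (p0 + d/2) - f p0 = (p0 + d/2 - p0) * f1 zz" by blast
    have "f1 zz > 0" using d(2)[rule_format, of "zz - p0"] zz z by auto
    hence "(p0 + d/2 - p0) * f1 zz > 0" using d by simp
    hence "f (p0 + d/2) - f p0 > 0" using zz(3) by simp
    with mx[of "p0 + d/2"] show False by simp
  qed
  ultimately show ?thesis by blast
qed

lemma max_time:
  fixes g :: "real \<Rightarrow> real"
  assumes mx: "\<And>t. t \<in> {t0..T} \<Longrightarrow> g t \<le> g t0"
    and lt: "t0 < T"
    and d: "(g has_real_derivative g1) (at t0)"
  shows "g1 \<le> 0"
proof (rule ccontr)
  assume "\<not> g1 \<le> 0"
  then obtain e where e: "e > 0" "\<forall>h>0. h < e \<longrightarrow> g t0 < g (t0 + h)"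
    using DERIV_pos_inc_right[OF d] by force
  define h where "h = min (e/2) (T - t0)"
  have "h > 0" "h < e" "t0 + h \<le> T" using e lt by (auto simp: h_def)
  thus False using e(2) mx[of "t0+h"] by force
qed

lemma key:
  fixes u ut up upp :: "real \<Rightarrow> real \<Rightarrow> real" and T \<sigma> C M s \<epsilon> :: real
  assumes s: "0 < s" "s < T" and ep: "\<epsilon> > 0"
    and M: "\<forall>t\<in>{0..T}. \<forall>p. \<bar>u t p\<bar> \<le> M"
    and cont: "continuous_on ({0..T} \<times> UNIV) (\<lambda>(t,p). u t p)"
    and ut: "\<forall>t\<in>{0<..<T}. \<forall>p. ((\<lambda>s. u s p) has_real_derivative ut t p) (at t)"
    and up: "\<forall>t\<in>{0..T}. \<forall>p. ((\<lambda>q. u t q) has_real_derivative up t p) (at p)"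
    and upp: "\<forall>t\<in>{0..T}. \<forall>p. ((\<lambda>q. up t q) has_real_derivative upp t p) (at p)"
    and ineq: "\<forall>t\<in>{0<..<T}. \<forall>p. 0 \<le> ut t p + 1/2*\<sigma>^2*upp t p + C*(up t p)^2"
    and trm: "\<forall>p. u T p \<le> 0"
  shows "\<forall>t\<in>{s..T}. \<forall>p. u t p - \<epsilon>*(\<sigma>^2+4*\<bar>C\<bar>*M+1)*(T-t) - \<epsilon>*p^2 \<le> 0"
proof -
  define \<eta> where "\<eta> = \<epsilon>*(\<sigma>^2+4*\<bar>C\<bar>*M+1)"
  define z where "z x = u (fst x) (snd x) - \<eta>*(T - fst x) - \<epsilon>*(snd x)^2" for x :: "real \<times> real"
  have M0: "M \<ge> 0" using M s by (meson abs_ge_zero atLeastAtMost_iff less_le order_trans)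
  define R where "R = sqrt(2*M/\<epsilon>) + 1"
  have R0: "R > 0" unfolding R_def using M0 ep by (simp add: add_nonneg_pos)
  define K where "K = {s..T} \<times> {-R..R}"
  have cK: "compact K" unfolding K_def by (intro compact_Times compact_Icc)
  have TK: "(T,0) \<in> K" using s R0 by (auto simp: K_def)
  have "(\<lambda>x. u (fst x) (snd x)) = (\<lambda>(t,p). u t p)" by auto
  hence cu: "continuous_on ({0..T} \<times> UNIV) (\<lambda>x. u (fst x) (snd x))" using cont by metis
  have cz: "continuous_on ({0..T} \<times> UNIV) z"
    unfolding z_def by (intro continuous_intros cu)
  have "K \<subseteq> {0..T} \<times> UNIV" using s by (auto simp: K_def)
  hence czK: "continuous_on K z" using cz continuous_on_subset by blast
  obtain x0 where x0: "x0 \<in> K" "\<And>y. y \<in> K \<Longrightarrow> z y \<le> z x0"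
    using continuous_attains_sup[OF cK _ czK] TK by blast
  have big: "z y \<le> z x0" if y: "y \<in> {s..T} \<times> UNIV" for y
  proof (cases "\<bar>snd y\<bar> \<le> R")
    case True
    then show ?thesis using x0(2)[of y] y by (cases y) (auto simp: K_def abs_le_iff)
  next
    case False
    have "sqrt(2*M/\<epsilon>) < \<bar>snd y\<bar>" using False R_def by simp
    hence "sqrt(2*M/\<epsilon>)^2 < \<bar>snd y\<bar>^2" using M0 ep by (intro power_strict_mono) auto
    hence "2*M/\<epsilon> < (snd y)^2" using M0 ep by simp
    hence "2*M < \<epsilon>*(snd y)^2" using ep by (simp add: field_simps)
    moreover have "u (fst y) (snd y) \<le> M" using M y s by (fastforce simp: abs_le_iff)
    moreover have "\<eta>*(T - fst y) \<ge> 0" using y ep M0 unfolding \<eta>_def by auto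
    moreover have "z (T,0) \<ge> -M" using M[rule_format, of T 0] s unfolding z_def by (auto simp: abs_le_iff)
    ultimately have "z y < z (T,0)" unfolding z_def by linarith
    then show ?thesis using x0(2)[OF TK] by linarith
  qed
  obtain t0 p0 where tp: "x0 = (t0,p0)" by (cases x0)
  have t0: "t0 \<in> {s..T}" using x0 tp by (auto simp: K_def)
  have "z x0 \<le> 0"
  proof (rule ccontr)
    assume pos: "\<not> z x0 \<le> 0"
    have "\<eta>*(T - t0) \<ge> 0" using t0 ep M0 unfolding \<eta>_def by auto
    moreover have "u t0 p0 \<le> M" using M t0 s by (fastforce simp: abs_le_iff)
    ultimately have ep0: "\<epsilon>*p0^2 \<le> M" using pos tp unfolding z_def by auto
    have "t0 \<noteq> T"
    proof
      assume "t0 = T"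
      then show False using pos tp trm[rule_format, of p0] ep unfolding z_def
        by (simp add: not_le) (smt (verit) mult_nonneg_nonneg zero_le_power2)
    qed
    hence tl: "t0 < T" using t0 by auto
    have t0i: "t0 \<in> {0<..<T}" "t0 \<in> {0..T}" using t0 tl s by auto
    have m1: "u t0 q - \<eta>*(T-t0) - \<epsilon>*q^2 \<le> u t0 p0 - \<eta>*(T-t0) - \<epsilon>*p0^2" for q
      using big[of "(t0,q)"] t0 tp unfolding z_def by auto
    have m2: "((\<lambda>q. u t0 q - \<eta>*(T-t0) - \<epsilon>*q^2) has_real_derivative up t0 q - 2*\<epsilon>*q) (at q)" for q
      using up t0i by (auto intro!: derivative_eq_intros)
    have m3: "((\<lambda>q. up t0 q - 2*\<epsilon>*q) has_real_derivative upp t0 p0 - 2*\<epsilon>) (at p0)"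
      using upp t0i by (auto intro!: derivative_eq_intros)
    have A: "up t0 p0 - 2*\<epsilon>*p0 = 0 \<and> upp t0 p0 - 2*\<epsilon> \<le> 0"
      using max_second[of "\<lambda>q. u t0 q - \<eta>*(T-t0) - \<epsilon>*q^2" p0 "\<lambda>q. up t0 q - 2*\<epsilon>*q"
        "upp t0 p0 - 2*\<epsilon>", OF m1 m2 m3] by simp
    have B: "ut t0 p0 + \<eta> \<le> 0"
    proof (rule max_time[where g="\<lambda>t. u t p0 - \<eta>*(T-t) - \<epsilon>*p0^2" and T=T, OF _ tl])
      show "u t p0 - \<eta>*(T-t) - \<epsilon>*p0^2 \<le> u t0 p0 - \<eta>*(T-t0) - \<epsilon>*p0^2" if "t \<in> {t0..T}" for t
        using big[of "(t,p0)"] t0 that tp unfolding z_def by auto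
      show "((\<lambda>t. u t p0 - \<eta>*(T-t) - \<epsilon>*p0^2) has_real_derivative ut t0 p0 + \<eta>) (at t0)"
        using ut t0i by (auto intro!: derivative_eq_intros)
    qed
    have I: "0 \<le> ut t0 p0 + 1/2*\<sigma>^2*upp t0 p0 + C*(up t0 p0)^2" using ineq t0i by auto
    have c1: "1/2*\<sigma>^2*upp t0 p0 \<le> \<sigma>^2*\<epsilon>"
      using A mult_left_mono[of "upp t0 p0" "2*\<epsilon>" "\<sigma>^2/2"] by simp
    have "C*(up t0 p0)^2 \<le> \<bar>C\<bar>*(up t0 p0)^2" by (simp add: mult_right_mono)
    also have "\<dots> = \<bar>C\<bar>*4*\<epsilon>*(\<epsilon>*p0^2)" using A by (simp add: power2_eq_square)
    also have "\<dots> \<le> \<bar>C\<bar>*4*\<epsilon>*M" using ep0 ep by (intro mult_left_mono) auto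
    finally have c2: "C*(up t0 p0)^2 \<le> \<bar>C\<bar>*4*\<epsilon>*M" .
    have "0 \<le> -\<eta> + \<sigma>^2*\<epsilon> + \<bar>C\<bar>*4*\<epsilon>*M" using I B c1 c2 by linarith
    thus False using ep unfolding \<eta>_def by (simp add: algebra_simps)
  qed
  show ?thesis
  proof (intro ballI allI)
    fix t p assume "t \<in> {s..T}"
    hence "z (t,p) \<le> 0" using big[of "(t,p)"] \<open>z x0 \<le> 0\<close> by auto
    thus "u t p - \<epsilon>*(\<sigma>^2+4*\<bar>C\<bar>*M+1)*(T-t) - \<epsilon>*p^2 \<le> 0" unfolding z_def \<eta>_def by simp
  qed
qed

lemma maxpr:
  fixes u ut up upp :: "real \<Rightarrow> real \<Rightarrow> real" and T \<sigma> C M :: real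
  assumes T: "0 < T"
    and M: "\<forall>t\<in>{0..T}. \<forall>p. \<bar>u t p\<bar> \<le> M"
    and cont: "continuous_on ({0..T} \<times> UNIV) (\<lambda>(t,p). u t p)"
    and ut: "\<forall>t\<in>{0<..<T}. \<forall>p. ((\<lambda>s. u s p) has_real_derivative ut t p) (at t)"
    and up: "\<forall>t\<in>{0..T}. \<forall>p. ((\<lambda>q. u t q) has_real_derivative up t p) (at p)"
    and upp: "\<forall>t\<in>{0..T}. \<forall>p. ((\<lambda>q. up t q) has_real_derivative upp t p) (at p)"
    and ineq: "\<forall>t\<in>{0<..<T}. \<forall>p. 0 \<le> ut t p + 1/2*\<sigma>^2*upp t p + C*(up t p)^2"
    and trm: "\<forall>p. u T p \<le> 0"
  shows "\<forall>t\<in>{0..T}. \<forall>p. u t p \<le> 0"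
proof -
  have "\<bar>u T 0\<bar> \<le> M" using M T by auto
  hence M0: "M \<ge> 0" by linarith
  define K where "K = \<sigma>^2+4*\<bar>C\<bar>*M+1"
  have K: "K > 0" unfolding K_def using M0 by (simp add: add_nonneg_pos)
  have open_part: "u t p \<le> 0" if t: "t \<in> {0<..T}" for t p
  proof (cases "t = T")
    case True then show ?thesis using trm by simp
  next
    case False
    hence tT: "0 < t/2" "t/2 < T" "t \<in> {t/2..T}" using t by auto
    show ?thesis
    proof (rule field_le_epsilon)
      fix e :: real assume e: "0 < e"
      define D where "D = K*(T-t) + p^2 + 1"
      have D: "D > 0" unfolding D_def using K t by (simp add: add_nonneg_pos)
      define \<epsilon> where "\<epsilon> = e / D"
      have ep: "\<epsilon> > 0" using e D by (simp add: \<epsilon>_def)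
      have "u t p - \<epsilon>*K*(T-t) - \<epsilon>*p^2 \<le> 0"
        using key[OF tT(1,2) ep M cont ut up upp ineq trm, rule_format, OF tT(3), of p] unfolding K_def .
      moreover have "\<epsilon>*K*(T-t) + \<epsilon>*p^2 \<le> \<epsilon> * D" unfolding D_def using ep by (simp add: distrib_left)
      moreover have "\<epsilon> * D = e" using D by (simp add: \<epsilon>_def)
      ultimately show "u t p \<le> 0 + e" by linarith
    qed
  qed
  show ?thesis
  proof (intro ballI allI)
    fix t p assume t: "t \<in> {0..T}"
    have cc: "continuous_on {0..T} (\<lambda>t. u t p)"
    proof -
      have "continuous_on {0..T} (\<lambda>t. (\<lambda>(t,p). u t p) (t,p))"
        by (rule continuous_on_compose2[OF cont]) (auto intro!: continuous_intros)
      thus ?thesis by simp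
    qed
    have "closure {0<..T} = {0..T}" using T by simp
    thus "u t p \<le> 0"
      using continuous_le_on_closure[of "{0<..T}" "\<lambda>t. u t p" t 0] cc t open_part by auto
  qed
qed

theorem mainTheorem5:
  fixes N :: nat and T \<sigma> lam kap :: real
    and H H1 H2 :: "nat \<Rightarrow> real \<Rightarrow> real"
    and v vt vp vpp :: "nat \<Rightarrow> real \<Rightarrow> real \<Rightarrow> real"
  assumes N: "N \<ge> 1" and T: "T > 0" and sig: "\<sigma> > 0" and lam: "lam > 0" and kap: "kap > 0"
    and H_C2b: "\<And>j. j \<in> {1..N} \<Longrightarrow> C2b (H j) (H1 j) (H2 j)"
    and H_sum: "\<And>p. (\<Sum>i=1..N. H i p) = 0"
    \<comment> \<open>classical solution in the class C^{1,2}, bounded with bounded p-derivatives\<close>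
    and v_t: "\<And>j t p. j \<in> {1..N} \<Longrightarrow> t \<in> {0<..<T} \<Longrightarrow>
                ((\<lambda>s. v j s p) has_real_derivative vt j t p) (at t)"
    and v_p: "\<And>j t p. j \<in> {1..N} \<Longrightarrow> t \<in> {0..T} \<Longrightarrow>
                ((\<lambda>q. v j t q) has_real_derivative vp j t p) (at p)"
    and v_pp: "\<And>j t p. j \<in> {1..N} \<Longrightarrow> t \<in> {0..T} \<Longrightarrow>
                ((\<lambda>q. vp j t q) has_real_derivative vpp j t p) (at p)"
    and cont_v: "\<And>j. j \<in> {1..N} \<Longrightarrow> continuous_on ({0..T} \<times> UNIV) (\<lambda>(t,p). v j t p)"
    and cont_vp: "\<And>j. j \<in> {1..N} \<Longrightarrow> continuous_on ({0..T} \<times> UNIV) (\<lambda>(t,p). vp j t p)"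
    and cont_vpp: "\<And>j. j \<in> {1..N} \<Longrightarrow> continuous_on ({0..T} \<times> UNIV) (\<lambda>(t,p). vpp j t p)"
    and cont_vt: "\<And>j. j \<in> {1..N} \<Longrightarrow> continuous_on ({0<..<T} \<times> UNIV) (\<lambda>(t,p). vt j t p)"
    and bnd_v: "\<And>j. j \<in> {1..N} \<Longrightarrow> bounded ((\<lambda>(t,p). v j t p) ` ({0..T} \<times> UNIV))"
    and bnd_vp: "\<And>j. j \<in> {1..N} \<Longrightarrow> bounded ((\<lambda>(t,p). vp j t p) ` ({0..T} \<times> UNIV))"
    and bnd_vpp: "\<And>j. j \<in> {1..N} \<Longrightarrow> bounded ((\<lambda>(t,p). vpp j t p) ` ({0..T} \<times> UNIV))"
    and pde: "\<And>j t p. j \<in> {1..N} \<Longrightarrow> t \<in> {0<..<T} \<Longrightarrow>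
                0 = vt j t p + 1/2 * \<sigma>^2 * vpp j t p
                    + lam * Xstar N lam kap vp t p * vp j t p
                    - kap * Xdot N lam kap vp j t p * Xstar N lam kap vp t p"
    and terminal: "\<And>j p. j \<in> {1..N} \<Longrightarrow> v j T p = H j p"
  shows "\<forall>t\<in>{0..T}. \<forall>p. (\<Sum>i=1..N. Xdot N lam kap vp i t p) = 0"
proof -
  define c where "c = lam / (kap * (real N + 1))"
  define a where "a = lam*c - kap*c^2"
  define w where "w t p = (\<Sum>i=1..N. v i t p)" for t p
  define wt where "wt t p = (\<Sum>i=1..N. vt i t p)" for t p
  define wp where "wp t p = (\<Sum>i=1..N. vp i t p)" for t p
  define wpp where "wpp t p = (\<Sum>i=1..N. vpp i t p)" for t p
  have XS: "Xstar N lam kap vp t p = c * wp t p" for t p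
    unfolding Xstar_def c_def wp_def by simp
  have XD: "(\<Sum>j=1..N. Xdot N lam kap vp j t p) = c * wp t p" for t p
  proof -
    have "(\<Sum>j=1..N. Xdot N lam kap vp j t p)
        = lam / kap * (wp t p - real N * (1 / (real N + 1) * wp t p))"
      unfolding Xdot_def wp_def
      by (simp only: sum_distrib_left[symmetric] sum_subtractf sum_constant card_atLeastAtMost) simp
    also have "\<dots> = c * wp t p" unfolding c_def using kap
      by (simp add: field_simps)
    finally show ?thesis .
  qed
  have "\<forall>j\<in>{1..N}. \<exists>B. \<forall>t\<in>{0..T}. \<forall>p. \<bar>v j t p\<bar> \<le> B"
  proof
    fix j assume j: "j \<in> {1..N}"
    from bnd_v[OF j] obtain B where "\<forall>x\<in>(\<lambda>(t,p). v j t p) ` ({0..T} \<times> UNIV). norm x \<le> B"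
      unfolding bounded_iff by blast
    thus "\<exists>B. \<forall>t\<in>{0..T}. \<forall>p. \<bar>v j t p\<bar> \<le> B" by force
  qed
  then obtain B where B: "\<And>j t p. j \<in> {1..N} \<Longrightarrow> t \<in> {0..T} \<Longrightarrow> \<bar>v j t p\<bar> \<le> B j"
    by metis
  define M where "M = (\<Sum>j=1..N. B j)"
  have Mw: "\<forall>t\<in>{0..T}. \<forall>p. \<bar>w t p\<bar> \<le> M"
  proof (intro ballI allI)
    fix t p assume t: "t \<in> {0..T}"
    have "\<bar>w t p\<bar> \<le> (\<Sum>j=1..N. \<bar>v j t p\<bar>)" unfolding w_def by (rule sum_abs)
    also have "\<dots> \<le> M" unfolding M_def using B t by (intro sum_mono) auto
    finally show "\<bar>w t p\<bar> \<le> M" .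
  qed
  have Mw': "\<forall>t\<in>{0..T}. \<forall>p. \<bar>- w t p\<bar> \<le> M" using Mw by simp
  have "(\<lambda>(t,p). w t p) = (\<lambda>x. \<Sum>i=1..N. (\<lambda>(t,p). v i t p) x)" unfolding w_def by auto
  hence cw: "continuous_on ({0..T} \<times> UNIV) (\<lambda>(t,p). w t p)"
    using cont_v by (auto intro!: continuous_on_sum)
  have cw': "continuous_on ({0..T} \<times> UNIV) (\<lambda>(t,p). - w t p)"
  proof -
    have "(\<lambda>(t,p). - w t p) = (\<lambda>x. - (\<lambda>(t,p). w t p) x)" by auto
    thus ?thesis using cw by (auto intro: continuous_on_minus)
  qed
  have dwt: "\<forall>t\<in>{0<..<T}. \<forall>p. ((\<lambda>s. w s p) has_real_derivative wt t p) (at t)"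
    unfolding w_def wt_def using v_t by (auto intro!: DERIV_sum)
  have dwp: "\<forall>t\<in>{0..T}. \<forall>p. ((\<lambda>q. w t q) has_real_derivative wp t p) (at p)"
    unfolding w_def wp_def using v_p by (auto intro!: DERIV_sum)
  have dwpp: "\<forall>t\<in>{0..T}. \<forall>p. ((\<lambda>q. wp t q) has_real_derivative wpp t p) (at p)"
    unfolding wpp_def wp_def using v_pp by (auto intro!: DERIV_sum)
  have dwt': "\<forall>t\<in>{0<..<T}. \<forall>p. ((\<lambda>s. - w s p) has_real_derivative - wt t p) (at t)"
    using dwt by (auto intro!: derivative_eq_intros)
  have dwp': "\<forall>t\<in>{0..T}. \<forall>p. ((\<lambda>q. - w t q) has_real_derivative - wp t p) (at p)"
    using dwp by (auto intro!: derivative_eq_intros)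
  have dwpp': "\<forall>t\<in>{0..T}. \<forall>p. ((\<lambda>q. - wp t q) has_real_derivative - wpp t p) (at p)"
    using dwpp by (auto intro!: derivative_eq_intros)
  have eq: "0 = wt t p + 1/2*\<sigma>^2*wpp t p + a*(wp t p)^2" if t: "t \<in> {0<..<T}" for t p
  proof -
    have "0 = (\<Sum>j=1..N. vt j t p + 1/2 * \<sigma>^2 * vpp j t p
                    + lam * Xstar N lam kap vp t p * vp j t p
                    - kap * Xdot N lam kap vp j t p * Xstar N lam kap vp t p)"
      using pde t by (simp add: sum.neutral)
    also have "\<dots> = wt t p + 1/2*\<sigma>^2*wpp t p + lam * Xstar N lam kap vp t p * wp t p
        - kap * (\<Sum>j=1..N. Xdot N lam kap vp j t p) * Xstar N lam kap vp t p"
      unfolding wt_def wpp_def wp_def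
      by (simp add: sum.distrib sum_subtractf sum_distrib_left sum_distrib_right)
    also have "\<dots> = wt t p + 1/2*\<sigma>^2*wpp t p + a*(wp t p)^2"
      unfolding XD XS a_def by (simp add: power2_eq_square algebra_simps)
    finally show ?thesis .
  qed
  have ineq1: "\<forall>t\<in>{0<..<T}. \<forall>p. 0 \<le> wt t p + 1/2*\<sigma>^2*wpp t p + a*(wp t p)^2"
    using eq by simp
  have ineq2: "\<forall>t\<in>{0<..<T}. \<forall>p. 0 \<le> - wt t p + 1/2*\<sigma>^2*(- wpp t p) + (-a)*(- wp t p)^2"
  proof (intro ballI allI)
    fix t p assume "t \<in> {0<..<T}"
    from eq[OF this, of p] show "0 \<le> - wt t p + 1/2*\<sigma>^2*(- wpp t p) + (-a)*(- wp t p)^2"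
      by simp
  qed
  have wT: "w T p = 0" for p
  proof -
    have "w T p = (\<Sum>i=1..N. H i p)" unfolding w_def by (rule sum.cong) (auto simp: terminal)
    thus ?thesis using H_sum by simp
  qed
  have trm1: "\<forall>p. w T p \<le> 0" using wT by simp
  have trm2: "\<forall>p. - w T p \<le> 0" using wT by simp
  have le1: "\<forall>t\<in>{0..T}. \<forall>p. w t p \<le> 0"
    by (rule maxpr[OF T Mw cw dwt dwp dwpp ineq1 trm1])
  have le2: "\<forall>t\<in>{0..T}. \<forall>p. - w t p \<le> 0"
    by (rule maxpr[OF T Mw' cw' dwt' dwp' dwpp' ineq2 trm2])
  show ?thesis
  proof (intro ballI allI)
    fix t p assume t: "t \<in> {0..T}"
    have "w t q = 0" for q using le1[rule_format, OF t, of q] le2[rule_format, OF t, of q] by linarith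
    hence e0: "w t = (\<lambda>q. 0)" by (rule ext)
    have "((\<lambda>q. w t q) has_real_derivative wp t p) (at p)" using dwp t by blast
    hence "((\<lambda>q. 0) has_real_derivative wp t p) (at p)" unfolding e0 .
    hence "wp t p = 0" using DERIV_const DERIV_unique by blast
    thus "(\<Sum>i=1..N. Xdot N lam kap vp i t p) = 0" using XD by simp
  qed
qed

end
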